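(* Let $\mu$ be a positive even integer, $h>0$, $t\ge 0$, and for $K\in\mathbb{N}$ and $k\in\{1,\dots,K-1\}$ define $$F_\mu(t,h,k,K)=\left(\frac{k!\,(K-k)!}{\prod_{\kappa=1}^K(K-k+\kappa)+(K+1)^K\left(\frac{t}{h}\right)^K}\right)^{\mu}.$$ Then for every $K\in\mathbb{N}$ and every $k=1,\dots,K-1$, $$F_\mu(t,h,k,K)\le F_\mu(t,h,K-1,K).$$ *)

theory Defs
  imports Complex_Main
begin

definition F_mu :: "nat \<Rightarrow> real \<Rightarrow> real \<Rightarrow> nat \<Rightarrow> nat \<Rightarrow> real" where
  "F_mu \<mu> t h k K =
     (fact k * fact (K - k) /
       ((\<Prod>\<kappa>=1..K. real (K - k + \<kappa>)) + (real K + 1) ^ K * (t / h) ^ K)) ^ \<mu>"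

end

theory Submission
  imports Defs
begin

lemma prod_shift: "real (fact m) * (\<Prod>\<kappa>=1..K. real (m + \<kappa>)) = fact (m + K)"
proof (induction K)
  case 0 then show ?case by simp
next
  case (Suc K)
  have "(\<Prod>\<kappa>=1..Suc K. real (m + \<kappa>)) = (\<Prod>\<kappa>=1..K. real (m + \<kappa>)) * real (m + Suc K)"
    by (simp add: prod.nat_ivl_Suc')
  then have "real (fact m) * (\<Prod>\<kappa>=1..Suc K. real (m + \<kappa>)) = (real (fact m) * (\<Prod>\<kappa>=1..K. real (m + \<kappa>))) * real (m + Suc K)"
    by simp
  also have "\<dots> = fact (m + K) * real (Suc (m + K))" using Suc by simp
  also have "\<dots> = fact (m + Suc K)" by (simp add: algebra_simps)
  finally show ?case .
qed

lemma claim1a: "j \<ge> 1 \<Longrightarrow> fact j * fact (Suc n) \<le> (fact (j + n) :: nat)"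
proof (induction n)
  case 0 then show ?case by simp
next
  case (Suc n)
  have "fact j * fact (Suc (Suc n)) = (Suc (Suc n)) * (fact j * fact (Suc n) :: nat)" by (simp add: algebra_simps)
  also have "\<dots> \<le> Suc (j + n) * fact (j + n)"
    using Suc by (intro mult_mono) auto
  finally show ?case by simp
qed

lemma claim1: "j \<ge> 1 \<Longrightarrow> m \<ge> 1 \<Longrightarrow> fact j * fact m \<le> (fact (j + m - 1) :: nat)"
  using claim1a[of j "m - 1"] by simp

lemma claim2a: "fact (Suc n) * fact (K + 1) \<le> (fact (K + Suc n) :: nat)"
proof (induction n)
  case 0 then show ?case by simp
next
  case (Suc n)
  have "fact (Suc (Suc n)) * fact (K + 1) = Suc (Suc n) * (fact (Suc n) * fact (K + 1) :: nat)" by (simp add: algebra_simps)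
  also have "\<dots> \<le> Suc (K + Suc n) * fact (K + Suc n)"
    using Suc by (intro mult_mono) auto
  finally show ?case by simp
qed

lemma claim2: "j \<ge> 1 \<Longrightarrow> fact j * fact (K + 1) \<le> (fact (K + j) :: nat)"
  using claim2a[of "j - 1" K] by simp

theorem proposition1:
  fixes \<mu> K k :: nat and t h :: real
  assumes "\<mu> > 0" and "even \<mu>" and "h > 0" and "t \<ge> 0"
    and "1 \<le> k" and "k \<le> K - 1"
  shows "F_mu \<mu> t h k K \<le> F_mu \<mu> t h (K - 1) K"
proof -
  define C where "C = (real K + 1) ^ K * (t / h) ^ K"
  have C0: "C \<ge> 0" unfolding C_def using assms by simp
  define a where "a = real (fact k * fact (K - k))"
  define b where "b = (\<Prod>\<kappa>=1..K. real (K - k + \<kappa>))"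
  define A where "A = real (fact (K - 1))"
  define B where "B = real (fact (K + 1))"
  have Kk: "K - k \<ge> 1" "k < K" using assms by auto
  have hb0: "real (fact (K - k)) * b = fact (K - k + K)"
    unfolding b_def using prod_shift[of "K - k" K] Kk by (simp add: add.commute)
  have e2: "K - k + K = 2 * K - k" using Kk by simp
  have hb: "real (fact (K - k)) * b = fact (2 * K - k)" using hb0 e2 by simp
  have bpos: "b > 0" unfolding b_def by (intro prod_pos) auto
  have hB: "(\<Prod>\<kappa>=1..K. real (K - (K - 1) + \<kappa>)) = B"
  proof -
    have "K - (K - 1) = 1" using Kk by auto
    then show ?thesis using prod_shift[of 1 K] unfolding B_def by (simp add: add.commute algebra_simps)
  qed
  have c1: "fact k * fact (K - k) \<le> (fact (K - 1) :: nat)"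
    using claim1[of k "K - k"] Kk assms by simp
  have c1': "fact (K - k) * fact k \<le> (fact (K - 1) :: nat)"
    using c1 by (simp add: mult.commute)
  have c2: "fact (K - k) * fact (K + 1) \<le> (fact (2 * K - k) :: nat)"
    using claim2[of "K - k" K] Kk e2 by (simp add: mult.commute add.commute)
  have "(fact (K - k) * fact k) * (fact (K - k) * fact (K + 1)) \<le> (fact (K - 1) * fact (2 * K - k) :: nat)"
    using c1' c2 by (intro mult_mono) auto
  then have R: "real ((fact (K - k) * fact k) * (fact (K - k) * fact (K + 1))) \<le> real (fact (K - 1) * fact (2 * K - k))"
    by linarith
  have "real (fact (K - k)) * (a * B) \<le> real (fact (K - k)) * (A * b)"
  proof -
    have "real (fact (K - k)) * (a * B) = real ((fact (K - k) * fact k) * (fact (K - k) * fact (K + 1)))"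
      unfolding a_def B_def by (simp only: of_nat_mult mult_ac)
    moreover have "real (fact (K - k)) * (A * b) = A * (real (fact (K - k)) * b)" by (simp only: mult_ac)
    moreover have "A * (real (fact (K - k)) * b) = real (fact (K - 1) * fact (2 * K - k))"
      unfolding hb A_def by simp
    ultimately show ?thesis using R by linarith
  qed
  then have aB: "a * B \<le> A * b" by (simp add: mult_le_cancel_left)
  have aA: "a \<le> A" unfolding a_def A_def using c1 by linarith
  have Bpos: "B > 0" unfolding B_def by (simp only: of_nat_0_less_iff fact_gt_zero)
  have a0: "a \<ge> 0" unfolding a_def by simp
  have "a * (B + C) \<le> A * (b + C)"
  proof -
    have "C * a \<le> C * A" using aA C0 by (rule mult_left_mono)
    then show ?thesis using aB by (simp add: algebra_simps)
  qed
  then have key: "a / (b + C) \<le> A / (B + C)"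
    using bpos Bpos C0 by (simp add: divide_simps)
  have "(a / (b + C)) ^ \<mu> \<le> (A / (B + C)) ^ \<mu>"
    using key a0 bpos C0 by (intro power_mono) auto
  moreover have "fact (K - (K - 1)) = (1::real)" using Kk by simp
  ultimately show ?thesis
    unfolding F_mu_def using hB Kk
    by (simp add: a_def b_def A_def B_def C_def)
qed

end
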